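(* For any $4$-regular graph $G$ on $n$ vertices, where $n=20$ or $n=21$, we have $\mathcal{E}(G)<2(n-1)$.
   Context: All graphs are finite, simple and undirected. The energy $\mathcal{E}(G)$ of a graph $G$ is the sum of the absolute values of the eigenvalues of its adjacency matrix. *)

theory Defs
  imports "Jordan_Normal_Form.Char_Poly" "HOL-Computational_Algebra.Polynomial"
begin

definition simple_graph :: "nat \<Rightarrow> (nat \<Rightarrow> nat \<Rightarrow> bool) \<Rightarrow> bool" where
  "simple_graph n E \<longleftrightarrow> (\<forall>i<n. \<forall>j<n. E i j \<longleftrightarrow> E j i) \<and> (\<forall>i<n. \<not> E i i)"

definition degree :: "nat \<Rightarrow> (nat \<Rightarrow> nat \<Rightarrow> bool) \<Rightarrow> nat \<Rightarrow> nat" where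
  "degree n E i = card {j. j < n \<and> E i j}"

definition regular_graph :: "nat \<Rightarrow> nat \<Rightarrow> (nat \<Rightarrow> nat \<Rightarrow> bool) \<Rightarrow> bool" where
  "regular_graph k n E \<longleftrightarrow> simple_graph n E \<and> (\<forall>i<n. degree n E i = k)"

definition adjacency_matrix :: "nat \<Rightarrow> (nat \<Rightarrow> nat \<Rightarrow> bool) \<Rightarrow> real mat" where
  "adjacency_matrix n E = mat n n (\<lambda>(i, j). if E i j then 1 else 0)"

text \<open>Eigenvalues (with algebraic multiplicity) = roots of the characteristic polynomial,
  taken over the complex numbers (they are real since the matrix is symmetric).\<close>
definition graph_eigenvalues :: "nat \<Rightarrow> (nat \<Rightarrow> nat \<Rightarrow> bool) \<Rightarrow> complex multiset" where
  "graph_eigenvalues n E = proots (char_poly (map_mat complex_of_real (adjacency_matrix n E)))"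

definition graph_energy :: "nat \<Rightarrow> (nat \<Rightarrow> nat \<Rightarrow> bool) \<Rightarrow> real" where
  "graph_energy n E = sum_mset (image_mset cmod (graph_eigenvalues n E))"

end

theory Submission
  imports Defs "Jordan_Normal_Form.Schur_Decomposition"
begin


definition tr :: "'a::comm_ring_1 mat \<Rightarrow> 'a" where
  "tr M = (\<Sum>i<dim_row M. M $$ (i,i))"

lemma tr_comm:
  assumes "X \<in> carrier_mat n n" "Y \<in> carrier_mat n n"
  shows "tr (X * Y) = tr (Y * X)"
proof -
  have "tr (X * Y) = (\<Sum>i<n. \<Sum>k<n. X $$ (i,k) * Y $$ (k,i))"
    using assms by (auto simp: tr_def scalar_prod_def row_def col_def intro!: sum.cong simp: atLeast0LessThan)
  also have "\<dots> = (\<Sum>k<n. \<Sum>i<n. Y $$ (k,i) * X $$ (i,k))"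
    by (subst sum.swap) (simp add: mult.commute)
  also have "\<dots> = tr (Y * X)"
    using assms by (auto simp: tr_def scalar_prod_def row_def col_def intro!: sum.cong simp: atLeast0LessThan)
  finally show ?thesis .
qed

lemma ut_mult:
  assumes X: "X \<in> carrier_mat n n" and Y: "Y \<in> carrier_mat n n"
    and uX: "upper_triangular X" and uY: "upper_triangular Y"
  shows "upper_triangular (X * Y) \<and> (\<forall>i<n. (X * Y) $$ (i,i) = X $$ (i,i) * Y $$ (i,i))"
proof -
  have e: "(X * Y) $$ (i,j) = (\<Sum>k<n. X $$ (i,k) * Y $$ (k,j))" if "i < n" "j < n" for i j
    using X Y that by (auto simp: scalar_prod_def row_def col_def atLeast0LessThan intro!: sum.cong)
  have z: "X $$ (i,k) * Y $$ (k,j) = 0" if "j < i" "i < n" "k < n" for i j k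
  proof (cases "k < i")
    case True then show ?thesis using upper_triangularD[OF uX, of k i] X that by simp
  next
    case False then have "j < k" using that by auto
    then show ?thesis using upper_triangularD[OF uY, of j k] Y that by simp
  qed
  have d: "X $$ (i,k) * Y $$ (k,i) = (if k = i then X $$ (i,i) * Y $$ (i,i) else 0)" if "i < n" "k < n" for i k
  proof (cases "k < i")
    case True then show ?thesis using upper_triangularD[OF uX, of k i] X that by simp
  next
    case False then show ?thesis using upper_triangularD[OF uY, of i k] Y that by (cases "k = i") auto
  qed
  show ?thesis
  proof
    show "upper_triangular (X * Y)" unfolding upper_triangular_def
    proof (intro allI impI)
      fix i j assume ij: "i < dim_row (X * Y)" "j < i"
      then have "i < n" "j < n" using X by auto
      moreover have "(\<Sum>k<n. X $$ (i,k) * Y $$ (k,j)) = 0"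
        by (rule sum.neutral) (use z ij \<open>i < n\<close> in auto)
      ultimately show "(X * Y) $$ (i, j) = 0" using ij by (simp add: e z)
    qed
    show "\<forall>i<n. (X * Y) $$ (i,i) = X $$ (i,i) * Y $$ (i,i)"
    proof (intro allI impI)
      fix i assume i: "i < n"
      have "(X * Y) $$ (i,i) = (\<Sum>k<n. if k = i then X $$ (i,i) * Y $$ (i,i) else 0)"
        unfolding e[OF i i] by (rule sum.cong[OF refl], rule d[OF i]) auto
      also have "\<dots> = X $$ (i,i) * Y $$ (i,i)" using i by simp
      finally show "(X * Y) $$ (i,i) = X $$ (i,i) * Y $$ (i,i)" .
    qed
  qed
qed

lemma ut_pow:
  assumes B: "B \<in> carrier_mat n n" and uB: "upper_triangular B"
  shows "upper_triangular (B ^\<^sub>m k) \<and> (\<forall>i<n. (B ^\<^sub>m k) $$ (i,i) = (B $$ (i,i)) ^ k)"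
proof (induction k)
  case 0
  then show ?case using B by (auto simp: upper_triangular_def)
next
  case (Suc k)
  have C: "B ^\<^sub>m k \<in> carrier_mat n n" using B by simp
  show ?case using ut_mult[OF C B _ uB] Suc by (simp del: power_Suc add: power_Suc2)
qed



abbreviation ar :: "(nat \<Rightarrow> nat \<Rightarrow> bool) \<Rightarrow> nat \<Rightarrow> nat \<Rightarrow> real" where
  "ar E i j \<equiv> (if E i j then 1 else 0)"

lemma adj_carrier: "adjacency_matrix n E \<in> carrier_mat n n"
  by (simp add: adjacency_matrix_def)

lemma adj_index: "i < n \<Longrightarrow> j < n \<Longrightarrow> adjacency_matrix n E $$ (i,j) = ar E i j"
  by (simp add: adjacency_matrix_def)

lemma deg_sum:
  assumes "regular_graph 4 n E" "i < n"
  shows "(\<Sum>j<n. ar E i j) = 4"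
proof -
  have "(\<Sum>j<n. ar E i j) = (\<Sum>j\<in>{j\<in>{..<n}. E i j}. 1)"
    using sum.inter_filter[of "{..<n}" "\<lambda>_. (1::real)" "E i"] by simp
  also have "{j\<in>{..<n}. E i j} = {j. j < n \<and> E i j}" by auto
  also have "(\<Sum>j\<in>{j. j < n \<and> E i j}. (1::real)) = real (degree n E i)"
    by (simp add: degree_def)
  finally show ?thesis using assms by (simp add: regular_graph_def)
qed

lemma E_sym:
  assumes "regular_graph 4 n E" "i < n" "j < n"
  shows "E i j = E j i"
  using assms unfolding regular_graph_def simple_graph_def by blast

lemma ar_diag:
  assumes "regular_graph 4 n E" "i < n"
  shows "ar E i i = 0"
  using assms by (auto simp: regular_graph_def simple_graph_def)

lemma mult_index_sum:
  assumes "X \<in> carrier_mat n n" "Y \<in> carrier_mat n n" "i < n" "j < n"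
  shows "(X * Y) $$ (i,j) = (\<Sum>k<n. X $$ (i,k) * Y $$ (k,j))"
  using assms by (auto simp: scalar_prod_def row_def col_def atLeast0LessThan intro!: sum.cong)

lemma tr_square:
  assumes "X \<in> carrier_mat n n"
  shows "tr (X * X) = (\<Sum>i<n. \<Sum>k<n. X $$ (i,k) * X $$ (k,i))"
proof -
  have "tr (X * X) = (\<Sum>i<n. (X * X) $$ (i,i))" using assms by (simp add: tr_def)
  also have "\<dots> = (\<Sum>i<n. \<Sum>k<n. X $$ (i,k) * X $$ (k,i))"
    by (rule sum.cong[OF refl], rule mult_index_sum[OF assms assms]) auto
  finally show ?thesis .
qed

lemma trace2:
  assumes reg: "regular_graph 4 n E"
  defines "A \<equiv> adjacency_matrix n E"
  shows "tr (A * A) = 4 * real n"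
proof -
  have "tr (A * A) = (\<Sum>i<n. \<Sum>k<n. ar E i k * ar E k i)"
    using tr_square[OF adj_carrier] by (simp add: A_def adj_index)
  also have "\<dots> = (\<Sum>i<n. \<Sum>k<n. ar E i k)"
  proof (intro sum.cong refl)
    fix i k assume "i \<in> {..<n}" "k \<in> {..<n}"
    then have "E k i = E i k" using E_sym[OF reg] by auto
    then show "ar E i k * ar E k i = ar E i k" by simp
  qed
  also have "\<dots> = (\<Sum>i<n. 4)"
    by (intro sum.cong refl) (simp add: deg_sum[OF reg])
  finally show ?thesis by simp
qed

lemma trace4:
  assumes reg: "regular_graph 4 n E"
  defines "A \<equiv> adjacency_matrix n E"
  shows "tr ((A * A) * (A * A)) \<ge> 28 * real n"
proof -
  have A: "A \<in> carrier_mat n n" by (simp add: A_def adj_carrier)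
  define M where "M = A * A"
  have M: "M \<in> carrier_mat n n" using A by (simp add: M_def)
  have Mij: "M $$ (i,j) = (\<Sum>k<n. ar E i k * ar E k j)" if "i < n" "j < n" for i j
    using mult_index_sum[OF A A that] that by (simp add: M_def A_def adj_index)
  have Mnat: "M $$ (i,j) = real (card {k\<in>{..<n}. E i k \<and> E k j})" if "i < n" "j < n" for i j
  proof -
    have "M $$ (i,j) = (\<Sum>k<n. (if E i k \<and> E k j then 1 else 0))"
      unfolding Mij[OF that] by (intro sum.cong refl) simp
    also have "\<dots> = (\<Sum>k\<in>{k\<in>{..<n}. E i k \<and> E k j}. 1)"
      using sum.inter_filter[of "{..<n}" "\<lambda>_. (1::real)" "\<lambda>k. E i k \<and> E k j"] by simp
    finally show ?thesis by simp
  qed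
  have Msym: "M $$ (j,i) = M $$ (i,j)" if "i < n" "j < n" for i j
  proof -
    have "{k\<in>{..<n}. E j k \<and> E k i} = {k\<in>{..<n}. E i k \<and> E k j}"
      using E_sym[OF reg] that by auto
    then show ?thesis using Mnat that by simp
  qed
  have Mii: "M $$ (i,i) = 4" if "i < n" for i
  proof -
    have "M $$ (i,i) = (\<Sum>k<n. ar E i k)"
      unfolding Mij[OF that that]
    proof (intro sum.cong refl)
      fix k assume "k \<in> {..<n}"
      then have "E k i = E i k" using E_sym[OF reg] that by auto
      then show "ar E i k * ar E k i = ar E i k" by simp
    qed
    then show ?thesis using deg_sum[OF reg that] by simp
  qed
  have rowsum: "(\<Sum>j<n. M $$ (i,j)) = 16" if "i < n" for i
  proof -
    have "(\<Sum>j<n. M $$ (i,j)) = (\<Sum>j<n. \<Sum>k<n. ar E i k * ar E k j)"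
      using Mij that by simp
    also have "\<dots> = (\<Sum>k<n. ar E i k * (\<Sum>j<n. ar E k j))"
      by (subst sum.swap) (simp add: sum_distrib_left)
    also have "\<dots> = (\<Sum>k<n. ar E i k * 4)"
      by (intro sum.cong refl) (simp add: deg_sum[OF reg])
    also have "\<dots> = 16" using deg_sum[OF reg that] by (simp add: sum_distrib_right[symmetric])
    finally show ?thesis .
  qed
  have sq_ge: "M $$ (i,j) \<le> (M $$ (i,j))^2" if ij: "i < n" "j < n" for i j
  proof -
    define m where "m = card {k\<in>{..<n}. E i k \<and> E k j}"
    have m: "M $$ (i,j) = real m" using Mnat[OF ij] by (simp add: m_def)
    have "m \<le> m^2" by (cases m) (auto simp: power2_eq_square)
    then show ?thesis unfolding m by (metis of_nat_le_iff of_nat_power)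
  qed
  have row4: "(\<Sum>j<n. (M $$ (i,j))^2) \<ge> 28" if "i < n" for i
  proof -
    have "(\<Sum>j<n. (M $$ (i,j))^2 - M $$ (i,j)) \<ge> (M $$ (i,i))^2 - M $$ (i,i)"
      using sq_ge that by (intro member_le_sum) auto
    then have "(\<Sum>j<n. (M $$ (i,j))^2) - (\<Sum>j<n. M $$ (i,j)) \<ge> 12"
      using Mii[OF that] by (simp add: sum_subtractf)
    then show ?thesis using rowsum[OF that] by simp
  qed
  have "tr (M * M) = (\<Sum>i<n. \<Sum>j<n. (M $$ (i,j))^2)"
    unfolding tr_square[OF M]
  proof (intro sum.cong refl)
    fix i j assume "i \<in> {..<n}" "j \<in> {..<n}"
    then show "M $$ (i,j) * M $$ (j,i) = (M $$ (i,j))^2" using Msym by (simp add: power2_eq_square)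
  qed
  also have "\<dots> \<ge> (\<Sum>i<n. 28)"
    using row4 by (intro sum_mono) auto
  finally show ?thesis by (simp add: M_def)
qed


lemma cert_A:
  fixes x :: real assumes "\<bar>x\<bar> \<le> 3"
  shows "\<bar>x\<bar> \<le> ((60471::real)/78125) + ((19999::real)/56250) * x^2 - ((3::real)/250) * x^4"
proof -
  define t where "t = \<bar>x\<bar>"
  have t0: "0 \<le> t" "t \<le> 3" using assms by (auto simp: t_def)
  have x2: "x^2 = t^2" by (simp add: t_def)
  have x4: "x^4 = t^4" by (simp add: t_def)
  have id: "((60471::real)/78125) + ((19999::real)/56250) * t^2 - ((3::real)/250) * t^4 - t = (t - ((9::real)/5))^2 * (((73::real)/56250) + ((3::real)/250) * (3 - t) * (3 + t + 2 * ((9::real)/5)))"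
    by (simp add: field_simps eval_nat_numeral)
  have "0 \<le> (t - ((9::real)/5))^2 * (((73::real)/56250) + ((3::real)/250) * (3 - t) * (3 + t + 2 * ((9::real)/5)))"
    using t0 by (intro mult_nonneg_nonneg add_nonneg_nonneg) auto
  then have "t \<le> ((60471::real)/78125) + ((19999::real)/56250) * t^2 - ((3::real)/250) * t^4" using id by linarith
  then show ?thesis unfolding x2 x4 by (simp add: t_def)
qed

lemma cert_B1:
  fixes x :: real assumes "\<bar>x\<bar> \<le> 4"
  shows "\<bar>x\<bar> \<le> ((187185873::real)/244140625) + ((11469649::real)/32812500) * x^2 - ((23::real)/2500) * x^4"
proof -
  define t where "t = \<bar>x\<bar>"
  have t0: "0 \<le> t" "t \<le> 4" using assms by (auto simp: t_def)
  have x2: "x^2 = t^2" by (simp add: t_def)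
  have x4: "x^4 = t^4" by (simp add: t_def)
  have id: "((187185873::real)/244140625) + ((11469649::real)/32812500) * t^2 - ((23::real)/2500) * t^4 - t = (t - ((42::real)/25))^2 * (((26413::real)/32812500) + ((23::real)/2500) * (4 - t) * (4 + t + 2 * ((42::real)/25)))"
    by (simp add: field_simps eval_nat_numeral)
  have "0 \<le> (t - ((42::real)/25))^2 * (((26413::real)/32812500) + ((23::real)/2500) * (4 - t) * (4 + t + 2 * ((42::real)/25)))"
    using t0 by (intro mult_nonneg_nonneg add_nonneg_nonneg) auto
  then have "t \<le> ((187185873::real)/244140625) + ((11469649::real)/32812500) * t^2 - ((23::real)/2500) * t^4" using id by linarith
  then show ?thesis unfolding x2 x4 by (simp add: t_def)
qed

lemma cert_B2:
  fixes x :: real assumes "\<bar>x\<bar> \<le> 4"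
  shows "\<bar>x\<bar> \<le> ((9873311::real)/12500000) + ((356717::real)/1062500) * x^2 - ((9::real)/1250) * x^4"
proof -
  define t where "t = \<bar>x\<bar>"
  have t0: "0 \<le> t" "t \<le> 4" using assms by (auto simp: t_def)
  have x2: "x^2 = t^2" by (simp add: t_def)
  have x4: "x^4 = t^4" by (simp add: t_def)
  have id: "((9873311::real)/12500000) + ((356717::real)/1062500) * t^2 - ((9::real)/1250) * t^4 - t = (t - ((17::real)/10))^2 * (((127903::real)/2125000) + ((9::real)/1250) * (4 - t) * (4 + t + 2 * ((17::real)/10)))"
    by (simp add: field_simps eval_nat_numeral)
  have "0 \<le> (t - ((17::real)/10))^2 * (((127903::real)/2125000) + ((9::real)/1250) * (4 - t) * (4 + t + 2 * ((17::real)/10)))"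
    using t0 by (intro mult_nonneg_nonneg add_nonneg_nonneg) auto
  then have "t \<le> ((9873311::real)/12500000) + ((356717::real)/1062500) * t^2 - ((9::real)/1250) * t^4" using id by linarith
  then show ?thesis unfolding x2 x4 by (simp add: t_def)
qed

lemma poly_B1_20:
  fixes t :: real assumes "(3::real) \<le> t" "t \<le> ((7::real)/2)"
  shows "4 + t + 18 * ((187185873::real)/244140625) + ((11469649::real)/32812500) * (64 - t^2) - ((23::real)/2500) * (304 - t^4) < 38"
proof -
  define S where "S = 4 + t + 18 * ((187185873::real)/244140625) + ((11469649::real)/32812500) * (64 - t^2) - ((23::real)/2500) * (304 - t^4)"
  define R where "R = ((316713149::real)/20507812500) * (((7::real)/2) - t)^4 + ((332893853::real)/2929687500) * (t - (3::real)) * (((7::real)/2) - t)^3 + ((17342217451::real)/82031250000) * (t - (3::real))^2 * (((7::real)/2) - t)^2 + ((666045649::real)/5126953125) * (t - (3::real))^3 * (((7::real)/2) - t) + ((1762027003::real)/109375000000) * (t - (3::real))^4"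
  have id: "38 - S = ((1::real)/100) + (16::real) * R"
    unfolding S_def R_def by (simp add: field_simps eval_nat_numeral)
  have "0 \<le> R" unfolding R_def
    using assms by (intro add_nonneg_nonneg mult_nonneg_nonneg zero_le_power) auto
  then have "S < 38" using id by linarith
  then show ?thesis unfolding S_def .
qed

lemma poly_B2_20:
  fixes t :: real assumes "((7::real)/2) \<le> t" "t \<le> (4::real)"
  shows "4 + t + 18 * ((9873311::real)/12500000) + ((356717::real)/1062500) * (64 - t^2) - ((9::real)/1250) * (304 - t^4) < 38"
proof -
  define S where "S = 4 + t + 18 * ((9873311::real)/12500000) + ((356717::real)/1062500) * (64 - t^2) - ((9::real)/1250) * (304 - t^4)"
  define R where "R = ((1395259::real)/212500000) * ((4::real) - t)^4 + ((4458859::real)/53125000) * (t - ((7::real)/2)) * ((4::real) - t)^3 + ((17428427::real)/106250000) * (t - ((7::real)/2))^2 * ((4::real) - t)^2 + ((2388867::real)/26562500) * (t - ((7::real)/2))^3 * ((4::real) - t) + ((299317::real)/106250000) * (t - ((7::real)/2))^4"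
  have id: "38 - S = ((1::real)/100) + (16::real) * R"
    unfolding S_def R_def by (simp add: field_simps eval_nat_numeral)
  have "0 \<le> R" unfolding R_def
    using assms by (intro add_nonneg_nonneg mult_nonneg_nonneg zero_le_power) auto
  then have "S < 38" using id by linarith
  then show ?thesis unfolding S_def .
qed

lemma poly_B1_21:
  fixes t :: real assumes "(3::real) \<le> t" "t \<le> ((7::real)/2)"
  shows "4 + t + 19 * ((187185873::real)/244140625) + ((11469649::real)/32812500) * (68 - t^2) - ((23::real)/2500) * (332 - t^4) < 40"
proof -
  define S where "S = 4 + t + 19 * ((187185873::real)/244140625) + ((11469649::real)/32812500) * (68 - t^2) - ((23::real)/2500) * (332 - t^4)"
  define R where "R = ((2217414817::real)/20507812500) * (((7::real)/2) - t)^4 + ((9933063643::real)/20507812500) * (t - (3::real)) * (((7::real)/2) - t)^3 + ((8994151069::real)/11718750000) * (t - (3::real))^2 * (((7::real)/2) - t)^2 + ((855582439::real)/1708984375) * (t - (3::real))^3 * (((7::real)/2) - t) + ((35697307697::real)/328125000000) * (t - (3::real))^4"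
  have id: "40 - S = ((1::real)/100) + (16::real) * R"
    unfolding S_def R_def by (simp add: field_simps eval_nat_numeral)
  have "0 \<le> R" unfolding R_def
    using assms by (intro add_nonneg_nonneg mult_nonneg_nonneg zero_le_power) auto
  then have "S < 40" using id by linarith
  then show ?thesis unfolding S_def .
qed

lemma poly_B2_21:
  fixes t :: real assumes "((7::real)/2) \<le> t" "t \<le> (4::real)"
  shows "4 + t + 19 * ((9873311::real)/12500000) + ((356717::real)/1062500) * (68 - t^2) - ((9::real)/1250) * (332 - t^4) < 40"
proof -
  define S where "S = 4 + t + 19 * ((9873311::real)/12500000) + ((356717::real)/1062500) * (68 - t^2) - ((9::real)/1250) * (332 - t^4)"
  define R where "R = ((4003843::real)/53125000) * ((4::real) - t)^4 + ((4769743::real)/13281250) * (t - ((7::real)/2)) * ((4::real) - t)^3 + ((30644383::real)/53125000) * (t - ((7::real)/2))^2 * ((4::real) - t)^2 + ((19397847::real)/53125000) * (t - ((7::real)/2))^3 * ((4::real) - t) + ((15218747::real)/212500000) * (t - ((7::real)/2))^4"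
  have id: "40 - S = ((1::real)/100) + (16::real) * R"
    unfolding S_def R_def by (simp add: field_simps eval_nat_numeral)
  have "0 \<le> R" unfolding R_def
    using assms by (intro add_nonneg_nonneg mult_nonneg_nonneg zero_le_power) auto
  then have "S < 40" using id by linarith
  then show ?thesis unfolding S_def .
qed


abbreviation Ac :: "nat \<Rightarrow> (nat \<Rightarrow> nat \<Rightarrow> bool) \<Rightarrow> complex mat" where
  "Ac n E \<equiv> map_mat complex_of_real (adjacency_matrix n E)"

lemma Ac_carrier: "Ac n E \<in> carrier_mat n n"
  by (simp add: adjacency_matrix_def)

lemma Ac_index: "i < n \<Longrightarrow> j < n \<Longrightarrow> Ac n E $$ (i,j) = complex_of_real (ar E i j)"
  by (simp add: adjacency_matrix_def)

lemma Ac_mult_vec: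
  assumes "v \<in> carrier_vec n" "i < n"
  shows "(Ac n E *\<^sub>v v) $ i = (\<Sum>j<n. complex_of_real (ar E i j) * v $ j)"
proof -
  have "(Ac n E *\<^sub>v v) $ i = row (Ac n E) i \<bullet> v" using assms Ac_carrier[of n E] by simp
  also have "\<dots> = (\<Sum>j<n. row (Ac n E) i $ j * v $ j)"
    using assms by (simp add: scalar_prod_def atLeast0LessThan)
  also have "\<dots> = (\<Sum>j<n. complex_of_real (ar E i j) * v $ j)"
  proof (rule sum.cong[OF refl])
    fix j assume "j \<in> {..<n}"
    then have j: "j < n" by simp
    then have "row (Ac n E) i $ j = Ac n E $$ (i,j)" using assms Ac_carrier[of n E] by simp
    also have "\<dots> = complex_of_real (ar E i j)" by (rule Ac_index[OF assms(2) j])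
    finally show "row (Ac n E) i $ j * v $ j = complex_of_real (ar E i j) * v $ j" by simp
  qed
  finally show ?thesis .
qed

lemma eig_props:
  assumes reg: "regular_graph 4 n E"
    and ev: "eigenvector (Ac n E) v e"
  shows "Im e = 0 \<and> cmod e \<le> 4"
proof -
  have v: "v \<in> carrier_vec n" "v \<noteq> 0\<^sub>v n" and Av: "Ac n E *\<^sub>v v = e \<cdot>\<^sub>v v"
    using ev Ac_carrier[of n E] unfolding eigenvector_def by auto
  have eq: "(\<Sum>j<n. complex_of_real (ar E i j) * v $ j) = e * v $ i" if "i < n" for i
  proof -
    have "(Ac n E *\<^sub>v v) $ i = (e \<cdot>\<^sub>v v) $ i" using Av by simp
    then show ?thesis using Ac_mult_vec[OF v(1) that] v(1) that by simp
  qed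
  obtain i1 where i1: "i1 < n" "v $ i1 \<noteq> 0"
  proof (rule ccontr)
    assume "\<not> thesis"
    with that have "\<forall>i<n. v $ i = 0" by blast
    then have "v = 0\<^sub>v n" using v(1) by (intro eq_vecI) auto
    with v(2) show False by simp
  qed
  define N where "N = (\<Sum>i<n. (cmod (v $ i))^2)"
  have "N \<ge> (cmod (v $ i1))^2"
    unfolding N_def by (rule member_le_sum) (use i1 in auto)
  moreover have "(cmod (v $ i1))^2 > 0" using i1 by simp
  ultimately have Npos: "N > 0" by linarith
  define S where "S = (\<Sum>i<n. cnj (v $ i) * (\<Sum>j<n. complex_of_real (ar E i j) * v $ j))"
  have S1: "S = e * complex_of_real N"
  proof -
    have "S = (\<Sum>i<n. e * (v $ i * cnj (v $ i)))"
      unfolding S_def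
    proof (intro sum.cong refl)
      fix i assume "i \<in> {..<n}"
      then have "cnj (v $ i) * (\<Sum>j<n. complex_of_real (ar E i j) * v $ j) = cnj (v $ i) * (e * v $ i)"
        using eq by simp
      then show "cnj (v $ i) * (\<Sum>j<n. complex_of_real (ar E i j) * v $ j) = e * (v $ i * cnj (v $ i))"
        by (simp add: mult_ac)
    qed
    also have "\<dots> = e * (\<Sum>i<n. complex_of_real ((cmod (v $ i))^2))"
      unfolding complex_norm_square by (simp add: sum_distrib_left)
    also have "\<dots> = e * complex_of_real N" by (simp add: N_def of_real_sum)
    finally show ?thesis .
  qed
  have S2: "cnj S = S"
  proof -
    have "cnj S = (\<Sum>i<n. \<Sum>j<n. complex_of_real (ar E i j) * (v $ i * cnj (v $ j)))"
      unfolding S_def by (simp add: sum_distrib_left mult_ac)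
    also have "\<dots> = (\<Sum>j<n. \<Sum>i<n. complex_of_real (ar E i j) * (v $ i * cnj (v $ j)))"
      by (rule sum.swap)
    also have "\<dots> = (\<Sum>j<n. \<Sum>i<n. complex_of_real (ar E j i) * (cnj (v $ j) * v $ i))"
    proof (intro sum.cong refl)
      fix i j assume "i \<in> {..<n}" "j \<in> {..<n}"
      then have "E i j = E j i" using E_sym[OF reg] by auto
      then show "complex_of_real (ar E i j) * (v $ i * cnj (v $ j)) = complex_of_real (ar E j i) * (cnj (v $ j) * v $ i)"
        by (simp add: mult_ac)
    qed
    also have "\<dots> = S"
      unfolding S_def by (simp add: sum_distrib_left mult_ac)
    finally show ?thesis .
  qed
  have "Im S = 0" using S2 by (metis complex_cnj_cancel_iff complex_is_Real_iff Reals_cnj_iff)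
  then have "Im e * N = 0" using S1 by simp
  then have ImE: "Im e = 0" using Npos by simp
  define m where "m = Max ((\<lambda>i. cmod (v $ i)) ` {..<n})"
  have fin: "finite ((\<lambda>i. cmod (v $ i)) ` {..<n})" by simp
  have ne: "(\<lambda>i. cmod (v $ i)) ` {..<n} \<noteq> {}" using i1 by auto
  obtain i0 where i0: "i0 < n" "cmod (v $ i0) = m"
    using Max_in[OF fin ne] unfolding m_def by auto
  have mge: "cmod (v $ j) \<le> m" if "j < n" for j
    unfolding m_def by (rule Max_ge[OF fin]) (use that in auto)
  have "cmod (v $ i1) > 0" using i1 by simp
  then have "m > 0" using mge[OF i1(1)] by linarith
  have "cmod e * m = cmod (e * v $ i0)" using i0 by (simp add: norm_mult)
  also have "\<dots> = cmod (\<Sum>j<n. complex_of_real (ar E i0 j) * v $ j)" using eq[OF i0(1)] by simp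
  also have "\<dots> \<le> (\<Sum>j<n. cmod (complex_of_real (ar E i0 j) * v $ j))" by (rule norm_sum)
  also have "\<dots> = (\<Sum>j<n. ar E i0 j * cmod (v $ j))" by (intro sum.cong refl) (simp add: norm_mult)
  also have "\<dots> \<le> (\<Sum>j<n. ar E i0 j * m)" by (intro sum_mono mult_left_mono) (auto intro: mge)
  also have "\<dots> = 4 * m" using deg_sum[OF reg i0(1)] by (simp add: sum_distrib_right[symmetric])
  finally have "cmod e * m \<le> 4 * m" .
  then have "cmod e \<le> 4" using \<open>m > 0\<close> by simp
  with ImE show ?thesis by simp
qed

lemma ones_eig:
  assumes reg: "regular_graph 4 n E" and n: "n > 0"
  shows "poly (char_poly (Ac n E)) 4 = 0"
proof -
  have "eigenvector (Ac n E) (vec n (\<lambda>_. 1)) 4"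
    unfolding eigenvector_def
  proof (intro conjI)
    show "vec n (\<lambda>_. 1) \<in> carrier_vec (dim_row (Ac n E))" by (simp add: adjacency_matrix_def)
    show "vec n (\<lambda>_. (1::complex)) \<noteq> 0\<^sub>v (dim_row (Ac n E))"
    proof
      assume h: "vec n (\<lambda>_. (1::complex)) = 0\<^sub>v (dim_row (Ac n E))"
      have "vec n (\<lambda>_. (1::complex)) $ 0 = (0\<^sub>v (dim_row (Ac n E)) :: complex vec) $ 0" by (simp only: h)
      then show False using n by (simp add: adjacency_matrix_def)
    qed
    show "Ac n E *\<^sub>v vec n (\<lambda>_. 1) = 4 \<cdot>\<^sub>v vec n (\<lambda>_. 1)"
    proof (rule eq_vecI)
      fix i assume "i < dim_vec (4 \<cdot>\<^sub>v vec n (\<lambda>_. 1::complex))"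
      then have i: "i < n" by simp
      have "(Ac n E *\<^sub>v vec n (\<lambda>_. 1)) $ i = (\<Sum>j<n. complex_of_real (ar E i j) * vec n (\<lambda>_. 1) $ j)"
        by (rule Ac_mult_vec) (auto simp: i)
      also have "\<dots> = complex_of_real (\<Sum>j<n. ar E i j)"
        by (simp add: of_real_sum)
      also have "\<dots> = 4" using deg_sum[OF reg i] by simp
      finally show "(Ac n E *\<^sub>v vec n (\<lambda>_. 1)) $ i = (4 \<cdot>\<^sub>v vec n (\<lambda>_. 1)) $ i" using i by simp
    qed (simp add: adjacency_matrix_def)
  qed
  then have "eigenvalue (Ac n E) 4" unfolding eigenvalue_def by blast
  then show ?thesis using eigenvalue_root_char_poly[OF Ac_carrier] by blast
qed

lemma tr_pow_eigs:
  assumes A: "(A::complex mat) \<in> carrier_mat n n" and cp: "char_poly A = (\<Prod>a\<leftarrow>es. [:-a,1:])"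
  shows "(\<Sum>a\<leftarrow>es. a^k) = tr (A ^\<^sub>m k)"
proof -
  obtain B P Q where sd: "schur_decomposition A es = (B,P,Q)" by (cases "schur_decomposition A es") auto
  from schur_decomposition[OF A cp sd] have sim: "similar_mat_wit A B P Q"
    and ut: "upper_triangular B" and dg: "diag_mat B = es" by auto
  note W = similar_mat_witD2[OF A sim]
  have Bk: "B ^\<^sub>m k \<in> carrier_mat n n" using W by simp
  have "A ^\<^sub>m k = P * B ^\<^sub>m k * Q" by (rule similar_mat_wit_pow_id[OF sim])
  then have "tr (A ^\<^sub>m k) = tr ((P * B ^\<^sub>m k) * Q)" by simp
  also have "\<dots> = tr (Q * (P * B ^\<^sub>m k))"
    by (rule tr_comm) (use W Bk in auto)
  also have "Q * (P * B ^\<^sub>m k) = (Q * P) * B ^\<^sub>m k"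
    by (rule assoc_mult_mat[symmetric]) (use W Bk in auto)
  also have "\<dots> = B ^\<^sub>m k" using left_mult_one_mat[OF Bk] W(2) by simp
  also have "tr (B ^\<^sub>m k) = (\<Sum>i<n. (B $$ (i,i))^k)"
    using ut_pow[OF _ ut, of n k] W Bk by (simp add: tr_def)
  also have "\<dots> = (\<Sum>a\<leftarrow>diag_mat B. a^k)"
    using W by (simp add: diag_mat_def sum_list_map_eq_sum_count atLeast0LessThan[symmetric] sum.list_conv_set_nth[symmetric]
        flip: sum_set_upt_conv_sum_list_nat)
  finally show ?thesis using dg by simp
qed


lemma cert_sum:
  fixes xs :: "real list"
  assumes "\<forall>x\<in>set xs. \<bar>x\<bar> \<le> a + c * x^2 - e * x^4"
  shows "(\<Sum>x\<leftarrow>xs. \<bar>x\<bar>) \<le> real (length xs) * a + c * (\<Sum>x\<leftarrow>xs. x^2) - e * (\<Sum>x\<leftarrow>xs. x^4)"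
  using assms by (induction xs) (auto simp: algebra_simps)

lemma sum_A:
  fixes xs :: "real list"
  assumes b: "\<forall>x\<in>set xs. \<bar>x\<bar> \<le> 3" and s2: "(\<Sum>x\<leftarrow>xs. x^2) = S2" and s4: "(\<Sum>x\<leftarrow>xs. x^4) \<ge> S4"
  shows "(\<Sum>x\<leftarrow>xs. \<bar>x\<bar>) \<le> real (length xs) * ((60471::real)/78125) + ((19999::real)/56250) * S2 - ((3::real)/250) * S4"
proof -
  have "\<forall>x\<in>set xs. \<bar>x\<bar> \<le> ((60471::real)/78125) + ((19999::real)/56250) * x^2 - ((3::real)/250) * x^4" using b cert_A by auto
  from cert_sum[OF this] have 1: "(\<Sum>x\<leftarrow>xs. \<bar>x\<bar>) \<le> real (length xs) * ((60471::real)/78125) + ((19999::real)/56250) * (\<Sum>x\<leftarrow>xs. x^2) - ((3::real)/250) * (\<Sum>x\<leftarrow>xs. x^4)" .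
  have 2: "((3::real)/250) * (\<Sum>x\<leftarrow>xs. x^4) \<ge> ((3::real)/250) * S4" using s4 by (intro mult_left_mono) auto
  have 3: "((19999::real)/56250) * (\<Sum>x\<leftarrow>xs. x^2) = ((19999::real)/56250) * S2" using s2 by simp
  show ?thesis using 1 2 3 by linarith
qed

lemma sum_B1:
  fixes xs :: "real list"
  assumes b: "\<forall>x\<in>set xs. \<bar>x\<bar> \<le> 4" and s2: "(\<Sum>x\<leftarrow>xs. x^2) = S2" and s4: "(\<Sum>x\<leftarrow>xs. x^4) \<ge> S4"
  shows "(\<Sum>x\<leftarrow>xs. \<bar>x\<bar>) \<le> real (length xs) * ((187185873::real)/244140625) + ((11469649::real)/32812500) * S2 - ((23::real)/2500) * S4"
proof -
  have "\<forall>x\<in>set xs. \<bar>x\<bar> \<le> ((187185873::real)/244140625) + ((11469649::real)/32812500) * x^2 - ((23::real)/2500) * x^4" using b cert_B1 by auto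
  from cert_sum[OF this] have 1: "(\<Sum>x\<leftarrow>xs. \<bar>x\<bar>) \<le> real (length xs) * ((187185873::real)/244140625) + ((11469649::real)/32812500) * (\<Sum>x\<leftarrow>xs. x^2) - ((23::real)/2500) * (\<Sum>x\<leftarrow>xs. x^4)" .
  have 2: "((23::real)/2500) * (\<Sum>x\<leftarrow>xs. x^4) \<ge> ((23::real)/2500) * S4" using s4 by (intro mult_left_mono) auto
  have 3: "((11469649::real)/32812500) * (\<Sum>x\<leftarrow>xs. x^2) = ((11469649::real)/32812500) * S2" using s2 by simp
  show ?thesis using 1 2 3 by linarith
qed

lemma sum_B2:
  fixes xs :: "real list"
  assumes b: "\<forall>x\<in>set xs. \<bar>x\<bar> \<le> 4" and s2: "(\<Sum>x\<leftarrow>xs. x^2) = S2" and s4: "(\<Sum>x\<leftarrow>xs. x^4) \<ge> S4"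
  shows "(\<Sum>x\<leftarrow>xs. \<bar>x\<bar>) \<le> real (length xs) * ((9873311::real)/12500000) + ((356717::real)/1062500) * S2 - ((9::real)/1250) * S4"
proof -
  have "\<forall>x\<in>set xs. \<bar>x\<bar> \<le> ((9873311::real)/12500000) + ((356717::real)/1062500) * x^2 - ((9::real)/1250) * x^4" using b cert_B2 by auto
  from cert_sum[OF this] have 1: "(\<Sum>x\<leftarrow>xs. \<bar>x\<bar>) \<le> real (length xs) * ((9873311::real)/12500000) + ((356717::real)/1062500) * (\<Sum>x\<leftarrow>xs. x^2) - ((9::real)/1250) * (\<Sum>x\<leftarrow>xs. x^4)" .
  have 2: "((9::real)/1250) * (\<Sum>x\<leftarrow>xs. x^4) \<ge> ((9::real)/1250) * S4" using s4 by (intro mult_left_mono) auto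
  have 3: "((356717::real)/1062500) * (\<Sum>x\<leftarrow>xs. x^2) = ((356717::real)/1062500) * S2" using s2 by simp
  show ?thesis using 1 2 3 by linarith
qed

lemma final_real_20:
  fixes rs :: "real list"
  assumes len: "length rs = 20" and four: "4 \<in> set rs"
    and bd: "\<forall>r\<in>set rs. \<bar>r\<bar> \<le> 4"
    and s2: "(\<Sum>r\<leftarrow>rs. r^2) = 80" and s4: "(\<Sum>r\<leftarrow>rs. r^4) \<ge> 560"
  shows "(\<Sum>r\<leftarrow>rs. \<bar>r\<bar>) < 38"
proof -
  define rs' where "rs' = remove1 4 rs"
  have len': "length rs' = 19" using len four by (simp add: rs'_def length_remove1)
  have sp: "(\<Sum>r\<leftarrow>rs. f r) = f 4 + (\<Sum>r\<leftarrow>rs'. f r)" for f :: "real \<Rightarrow> real"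
    unfolding rs'_def by (rule sum_list_map_remove1[OF four])
  have bd': "\<forall>r\<in>set rs'. \<bar>r\<bar> \<le> 4" using bd set_remove1_subset[of 4 rs] unfolding rs'_def by blast
  have s2': "(\<Sum>r\<leftarrow>rs'. r^2) = 64" using s2 sp[of "\<lambda>r. r^2"] by simp
  have s4': "(\<Sum>r\<leftarrow>rs'. r^4) \<ge> 304" using s4 sp[of "\<lambda>r. r^4"] by simp
  have a1: "(\<Sum>r\<leftarrow>rs. \<bar>r\<bar>) = 4 + (\<Sum>r\<leftarrow>rs'. \<bar>r\<bar>)" using sp[of abs] by simp
  show ?thesis
  proof (cases "\<forall>r\<in>set rs'. \<bar>r\<bar> \<le> 3")
    case True
    from sum_A[OF True s2' s4'] len'
    have "(\<Sum>r\<leftarrow>rs'. \<bar>r\<bar>) \<le> 19 * ((60471::real)/78125) + ((19999::real)/56250) * 64 - ((3::real)/250) * 304" by simp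
    moreover have "4 + (19 * ((60471::real)/78125) + ((19999::real)/56250) * 64 - ((3::real)/250) * 304) < (38 :: real)" by simp
    ultimately show ?thesis using a1 by linarith
  next
    case False
    then obtain y where y: "y \<in> set rs'" "\<bar>y\<bar> > 3" by auto
    define rs'' where "rs'' = remove1 y rs'"
    have len'': "length rs'' = 18" using len' y by (simp add: rs''_def length_remove1)
    have sp': "(\<Sum>r\<leftarrow>rs'. f r) = f y + (\<Sum>r\<leftarrow>rs''. f r)" for f :: "real \<Rightarrow> real"
      unfolding rs''_def by (rule sum_list_map_remove1[OF y(1)])
    have bd'': "\<forall>r\<in>set rs''. \<bar>r\<bar> \<le> 4" using bd' set_remove1_subset[of y rs'] unfolding rs''_def by blast
    have s2'': "(\<Sum>r\<leftarrow>rs''. r^2) = 64 - y^2" using s2' sp'[of "\<lambda>r. r^2"] by simp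
    have s4'': "(\<Sum>r\<leftarrow>rs''. r^4) \<ge> 304 - y^4" using s4' sp'[of "\<lambda>r. r^4"] by simp
    have a2: "(\<Sum>r\<leftarrow>rs'. \<bar>r\<bar>) = \<bar>y\<bar> + (\<Sum>r\<leftarrow>rs''. \<bar>r\<bar>)" using sp'[of abs] by simp
    have y2: "\<bar>y\<bar>^2 = y^2" by simp
    have y4: "\<bar>y\<bar>^4 = y^4" by simp
    show ?thesis
    proof (cases "\<bar>y\<bar> \<le> 7/2")
      case True
      have P: "4 + \<bar>y\<bar> + 18 * ((187185873::real)/244140625) + ((11469649::real)/32812500) * (64 - y^2) - ((23::real)/2500) * (304 - y^4) < 38"
        using poly_B1_20[of "\<bar>y\<bar>"] y(2) True unfolding y2 y4 by simp
      from sum_B1[OF bd'' s2'' s4''] len''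
      have "(\<Sum>r\<leftarrow>rs''. \<bar>r\<bar>) \<le> 18 * ((187185873::real)/244140625) + ((11469649::real)/32812500) * (64 - y^2) - ((23::real)/2500) * (304 - y^4)" by simp
      then show ?thesis using P a1 a2 by linarith
    next
      case False
      have yb: "\<bar>y\<bar> \<le> 4" using bd' y(1) by blast
      have P: "4 + \<bar>y\<bar> + 18 * ((9873311::real)/12500000) + ((356717::real)/1062500) * (64 - y^2) - ((9::real)/1250) * (304 - y^4) < 38"
        using poly_B2_20[of "\<bar>y\<bar>"] yb False unfolding y2 y4 by simp
      from sum_B2[OF bd'' s2'' s4''] len''
      have "(\<Sum>r\<leftarrow>rs''. \<bar>r\<bar>) \<le> 18 * ((9873311::real)/12500000) + ((356717::real)/1062500) * (64 - y^2) - ((9::real)/1250) * (304 - y^4)" by simp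
      then show ?thesis using P a1 a2 by linarith
    qed
  qed
qed

lemma final_real_21:
  fixes rs :: "real list"
  assumes len: "length rs = 21" and four: "4 \<in> set rs"
    and bd: "\<forall>r\<in>set rs. \<bar>r\<bar> \<le> 4"
    and s2: "(\<Sum>r\<leftarrow>rs. r^2) = 84" and s4: "(\<Sum>r\<leftarrow>rs. r^4) \<ge> 588"
  shows "(\<Sum>r\<leftarrow>rs. \<bar>r\<bar>) < 40"
proof -
  define rs' where "rs' = remove1 4 rs"
  have len': "length rs' = 20" using len four by (simp add: rs'_def length_remove1)
  have sp: "(\<Sum>r\<leftarrow>rs. f r) = f 4 + (\<Sum>r\<leftarrow>rs'. f r)" for f :: "real \<Rightarrow> real"
    unfolding rs'_def by (rule sum_list_map_remove1[OF four])
  have bd': "\<forall>r\<in>set rs'. \<bar>r\<bar> \<le> 4" using bd set_remove1_subset[of 4 rs] unfolding rs'_def by blast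
  have s2': "(\<Sum>r\<leftarrow>rs'. r^2) = 68" using s2 sp[of "\<lambda>r. r^2"] by simp
  have s4': "(\<Sum>r\<leftarrow>rs'. r^4) \<ge> 332" using s4 sp[of "\<lambda>r. r^4"] by simp
  have a1: "(\<Sum>r\<leftarrow>rs. \<bar>r\<bar>) = 4 + (\<Sum>r\<leftarrow>rs'. \<bar>r\<bar>)" using sp[of abs] by simp
  show ?thesis
  proof (cases "\<forall>r\<in>set rs'. \<bar>r\<bar> \<le> 3")
    case True
    from sum_A[OF True s2' s4'] len'
    have "(\<Sum>r\<leftarrow>rs'. \<bar>r\<bar>) \<le> 20 * ((60471::real)/78125) + ((19999::real)/56250) * 68 - ((3::real)/250) * 332" by simp
    moreover have "4 + (20 * ((60471::real)/78125) + ((19999::real)/56250) * 68 - ((3::real)/250) * 332) < (40 :: real)" by simp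
    ultimately show ?thesis using a1 by linarith
  next
    case False
    then obtain y where y: "y \<in> set rs'" "\<bar>y\<bar> > 3" by auto
    define rs'' where "rs'' = remove1 y rs'"
    have len'': "length rs'' = 19" using len' y by (simp add: rs''_def length_remove1)
    have sp': "(\<Sum>r\<leftarrow>rs'. f r) = f y + (\<Sum>r\<leftarrow>rs''. f r)" for f :: "real \<Rightarrow> real"
      unfolding rs''_def by (rule sum_list_map_remove1[OF y(1)])
    have bd'': "\<forall>r\<in>set rs''. \<bar>r\<bar> \<le> 4" using bd' set_remove1_subset[of y rs'] unfolding rs''_def by blast
    have s2'': "(\<Sum>r\<leftarrow>rs''. r^2) = 68 - y^2" using s2' sp'[of "\<lambda>r. r^2"] by simp
    have s4'': "(\<Sum>r\<leftarrow>rs''. r^4) \<ge> 332 - y^4" using s4' sp'[of "\<lambda>r. r^4"] by simp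
    have a2: "(\<Sum>r\<leftarrow>rs'. \<bar>r\<bar>) = \<bar>y\<bar> + (\<Sum>r\<leftarrow>rs''. \<bar>r\<bar>)" using sp'[of abs] by simp
    have y2: "\<bar>y\<bar>^2 = y^2" by simp
    have y4: "\<bar>y\<bar>^4 = y^4" by simp
    show ?thesis
    proof (cases "\<bar>y\<bar> \<le> 7/2")
      case True
      have P: "4 + \<bar>y\<bar> + 19 * ((187185873::real)/244140625) + ((11469649::real)/32812500) * (68 - y^2) - ((23::real)/2500) * (332 - y^4) < 40"
        using poly_B1_21[of "\<bar>y\<bar>"] y(2) True unfolding y2 y4 by simp
      from sum_B1[OF bd'' s2'' s4''] len''
      have "(\<Sum>r\<leftarrow>rs''. \<bar>r\<bar>) \<le> 19 * ((187185873::real)/244140625) + ((11469649::real)/32812500) * (68 - y^2) - ((23::real)/2500) * (332 - y^4)" by simp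
      then show ?thesis using P a1 a2 by linarith
    next
      case False
      have yb: "\<bar>y\<bar> \<le> 4" using bd' y(1) by blast
      have P: "4 + \<bar>y\<bar> + 19 * ((9873311::real)/12500000) + ((356717::real)/1062500) * (68 - y^2) - ((9::real)/1250) * (332 - y^4) < 40"
        using poly_B2_21[of "\<bar>y\<bar>"] yb False unfolding y2 y4 by simp
      from sum_B2[OF bd'' s2'' s4''] len''
      have "(\<Sum>r\<leftarrow>rs''. \<bar>r\<bar>) \<le> 19 * ((9873311::real)/12500000) + ((356717::real)/1062500) * (68 - y^2) - ((9::real)/1250) * (332 - y^4)" by simp
      then show ?thesis using P a1 a2 by linarith
    qed
  qed
qed


lemma proots_lin: "proots (\<Prod>a\<leftarrow>es. [:-a, 1:]) = mset (es :: complex list)"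
proof (induction es)
  case Nil
  then show ?case by simp
next
  case (Cons a es)
  have nz: "(\<Prod>a\<leftarrow>es. [:-a, 1:]) \<noteq> (0 :: complex poly)"
    by (auto simp: prod_list_zero_iff)
  have "proots (\<Prod>a\<leftarrow>a # es. [:-a, 1:]) = proots ([:-a, 1:] * (\<Prod>a\<leftarrow>es. [:-a, 1:]))" by simp
  also have "\<dots> = proots [:-a, 1:] + proots (\<Prod>a\<leftarrow>es. [:-a, 1:])"
    by (rule proots_mult) (use nz in auto)
  also have "\<dots> = {#a#} + mset es" using Cons by simp
  finally show ?case by simp
qed

lemma poly_lin_zero: "poly (\<Prod>a\<leftarrow>es. [:-a, 1:]) x = 0 \<longleftrightarrow> x \<in> set (es :: complex list)"
  by (induction es) auto

lemma tr_map_real: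
  assumes "M \<in> carrier_mat n n"
  shows "tr (map_mat complex_of_real M) = complex_of_real (tr M)"
  using assms by (simp add: tr_def of_real_sum)

lemma sum_list_of_real: "(\<Sum>a\<leftarrow>map complex_of_real rs. a^k) = complex_of_real (\<Sum>r\<leftarrow>rs. r^k)"
  by (induction rs) auto

lemma energy_list: "sum_mset (image_mset cmod (mset (map complex_of_real rs))) = (\<Sum>r\<leftarrow>rs. \<bar>r\<bar>)"
  by (induction rs) auto

theorem theorem3p1:
  fixes n :: nat and E :: "nat \<Rightarrow> nat \<Rightarrow> bool"
  assumes "n = 20 \<or> n = 21"
    and "regular_graph 4 n E"
  shows "graph_energy n E < 2 * (real n - 1)"
proof -
  have reg: "regular_graph 4 n E" by (rule assms(2))
  have npos: "n > 0" using assms(1) by auto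
  define A where "A = adjacency_matrix n E"
  have A: "A \<in> carrier_mat n n" by (simp add: A_def adj_carrier)
  obtain es where cp: "char_poly (Ac n E) = (\<Prod>a\<leftarrow>es. [:-a, 1:])" and len: "length es = n"
    using char_poly_factorized[OF Ac_carrier] by blast
  have ge: "graph_eigenvalues n E = mset es"
    unfolding graph_eigenvalues_def cp by (rule proots_lin)
  have eig: "Im e = 0 \<and> cmod e \<le> 4" if "e \<in> set es" for e
  proof -
    have "poly (char_poly (Ac n E)) e = 0" unfolding cp poly_lin_zero by (rule that)
    then have "eigenvalue (Ac n E) e" using eigenvalue_root_char_poly[OF Ac_carrier] by blast
    then obtain v where "eigenvector (Ac n E) v e" unfolding eigenvalue_def by blast
    then show ?thesis by (rule eig_props[OF reg])
  qed
  have four: "4 \<in> set es"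
    using ones_eig[OF reg npos] unfolding cp poly_lin_zero .
  define rs where "rs = map Re es"
  have "map (\<lambda>e. complex_of_real (Re e)) es = es"
    by (rule map_idI) (use eig in \<open>auto simp: complex_eq_iff\<close>)
  then have es_rs: "es = map complex_of_real rs" unfolding rs_def by (simp add: o_def)
  have energy: "graph_energy n E = (\<Sum>r\<leftarrow>rs. \<bar>r\<bar>)"
    unfolding graph_energy_def ge es_rs by (rule energy_list)
  have lenr: "length rs = n" using len by (simp add: rs_def)
  have c4: "complex_of_real x = 4 \<longleftrightarrow> x = 4" for x by (metis of_real_eq_iff of_real_numeral)
  have fourr: "4 \<in> set rs" using four unfolding es_rs by (auto simp: c4)
  have bdr: "\<forall>r\<in>set rs. \<bar>r\<bar> \<le> 4"
  proof
    fix r assume "r \<in> set rs"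
    then have "complex_of_real r \<in> set es" unfolding es_rs by simp
    from eig[OF this] show "\<bar>r\<bar> \<le> 4" by simp
  qed
  have pw: "(\<Sum>r\<leftarrow>rs. r^k) = tr (A ^\<^sub>m k)" for k
  proof -
    have "complex_of_real (\<Sum>r\<leftarrow>rs. r^k) = (\<Sum>a\<leftarrow>es. a^k)"
      unfolding es_rs by (rule sum_list_of_real[symmetric])
    also have "\<dots> = tr (Ac n E ^\<^sub>m k)" by (rule tr_pow_eigs[OF Ac_carrier cp])
    also have "Ac n E ^\<^sub>m k = map_mat complex_of_real (A ^\<^sub>m k)"
      unfolding A_def by (rule of_real_hom.mat_hom_pow[OF adj_carrier, symmetric])
    also have "tr \<dots> = complex_of_real (tr (A ^\<^sub>m k))"
      by (rule tr_map_real[of _ n]) (use A in simp)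
    finally show ?thesis by simp
  qed
  have A2: "A ^\<^sub>m 2 = A * A" using A by (simp add: numeral_2_eq_2)
  have A4: "A ^\<^sub>m 4 = (A * A) * (A * A)"
  proof -
    have "A ^\<^sub>m 4 = ((A * A) * A) * A" using A by (simp add: numeral_eq_Suc)
    also have "\<dots> = (A * A) * (A * A)"
      by (rule assoc_mult_mat[of "A * A" n n A n A n]) (use A in auto)
    finally show ?thesis .
  qed
  have t2: "tr (A ^\<^sub>m 2) = 4 * real n" unfolding A2 unfolding A_def by (rule trace2[OF reg])
  have t4: "tr (A ^\<^sub>m 4) \<ge> 28 * real n" unfolding A4 unfolding A_def by (rule trace4[OF reg])
  have s2: "(\<Sum>r\<leftarrow>rs. r^2) = 4 * real n" using pw[of 2] t2 by simp
  have s4: "(\<Sum>r\<leftarrow>rs. r^4) \<ge> 28 * real n" using pw[of 4] t4 by simp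
  show ?thesis
    using assms(1)
  proof
    assume n: "n = 20"
    have "(\<Sum>r\<leftarrow>rs. \<bar>r\<bar>) < 38"
      by (rule final_real_20) (use lenr fourr bdr s2 s4 n in auto)
    then show ?thesis using n energy by simp
  next
    assume n: "n = 21"
    have "(\<Sum>r\<leftarrow>rs. \<bar>r\<bar>) < 40"
      by (rule final_real_21) (use lenr fourr bdr s2 s4 n in auto)
    then show ?thesis using n energy by simp
  qed
qed

end
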